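(* For every $j \geq 1$, the partial function $\xi_j$ preserves both $\rho_1$ and $\rho_C$, i.e. $\xi_j \in \mathrm{pPol}\,\rho_1$ and $\xi_j\in\mathrm{pPol}\,\rho_C$.
   Context: Partial functions are on $\{0,1\}$: an $n$-ary partial function is a map $f:\operatorname{dom} f\to\{0,1\}$ with $\operatorname{dom} f\subseteq\{0,1\}^n$. For a relation $\rho\subseteq\{0,1\}^h$, $f$ preserves $\rho$ ($f\in\mathrm{pPol}\,\rho$) if for every $h\times n$ matrix whose rows lie in $\operatorname{dom} f$ and whose columns lie in $\rho$, the column obtained by applying $f$ to each row lies in $\rho$. Let $n(k,p)=(2k-1)p+1$ for $k\ge2$, $p\ge1$; $\tau^k_p$ is the $n(k,p)$-ary partial function with domain $\{(1,\dots,1)\}\cup\{\mathbf{x}\in\{0,1\}^{n(k,p)}:\mathbf{x}\text{ has at most }p\text{ entries equal to }1\}$, taking value $1$ at $(1,\dots,1)$ and $0$ elsewhere on its domain. Let $p_1=1$, $p_j=n(j,p_{j-1})$ for $j\ge2$, and $\xi_j=\tau^{j+1}_{p_j}$. $\rho_C\subseteq\{0,1\}^4$ consists of the tuples $(0,0,0,0),(0,0,1,1),(0,1,0,1),(1,1,1,1)$; $\rho_1\subseteq\{0,1\}^4$ consists of $(0,0,0,0),(0,0,1,1),(0,1,0,1),(1,0,1,0),(1,1,0,0),(1,1,1,1)$. *)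

theory Defs
  imports Main
begin

text \<open>Boolean tuples are lists of bool (False = 0, True = 1).
An n-ary partial function is given by its arity, its domain (a set of
length-n tuples) and a total function that is only consulted on the domain.\<close>

record pfun =
  arity :: nat
  pdom :: "bool list set"
  pval :: "bool list \<Rightarrow> bool"

definition is_pfun :: "pfun \<Rightarrow> bool" where
  "is_pfun f \<longleftrightarrow> (\<forall>x\<in>pdom f. length x = arity f)"

definition is_rel :: "nat \<Rightarrow> bool list set \<Rightarrow> bool" where
  "is_rel h \<rho> \<longleftrightarrow> (\<forall>t\<in>\<rho>. length t = h)"

definition preserves :: "pfun \<Rightarrow> nat \<Rightarrow> bool list set \<Rightarrow> bool" where
  "preserves f h \<rho> \<longleftrightarrow>
     (\<forall>M :: nat \<Rightarrow> nat \<Rightarrow> bool.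
        (\<forall>i<h. map (M i) [0..<arity f] \<in> pdom f) \<longrightarrow>
        (\<forall>c<arity f. map (\<lambda>i. M i c) [0..<h] \<in> \<rho>) \<longrightarrow>
        map (\<lambda>i. pval f (map (M i) [0..<arity f])) [0..<h] \<in> \<rho>)"

definition nkp :: "nat \<Rightarrow> nat \<Rightarrow> nat" where
  "nkp k p = (2 * k - 1) * p + 1"

definition tau :: "nat \<Rightarrow> nat \<Rightarrow> pfun" where
  "tau k p = \<lparr> arity = nkp k p,
     pdom = {replicate (nkp k p) True} \<union>
            {x. length x = nkp k p \<and> length (filter id x) \<le> p},
     pval = (\<lambda>x. x = replicate (nkp k p) True) \<rparr>"

fun pseq :: "nat \<Rightarrow> nat" where
  "pseq 0 = 1"
| "pseq (Suc 0) = 1"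
| "pseq (Suc (Suc j)) = nkp (Suc (Suc j)) (pseq (Suc j))"

definition xi :: "nat \<Rightarrow> pfun" where
  "xi j = tau (j + 1) (pseq j)"

definition rho_C :: "bool list set" where
  "rho_C = {[False,False,False,False], [False,False,True,True],
            [False,True,False,True], [True,True,True,True]}"

definition rho_1 :: "bool list set" where
  "rho_1 = {[False,False,False,False], [False,False,True,True],
            [False,True,False,True], [True,False,True,False],
            [True,True,False,False], [True,True,True,True]}"

end

theory Submission
  imports Defs
begin

lemma upt4: "[0..<4] = [0::nat,1,2,3]"
  by (simp add: upt_rec)

lemma map_rep: "(map f [0..<n] = replicate n True) \<longleftrightarrow> (\<forall>c<n. f c)"
  by (auto simp: list_eq_iff_nth_eq)

lemma filt_card: "length (filter id (map f [0..<n])) = card {c. c < n \<and> f c}"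
  by (simp add: length_filter_conv_card cong: conj_cong)

lemma row_dom:
  "map f [0..<nkp k p] \<in> pdom (tau k p) \<longleftrightarrow>
     (\<forall>c<nkp k p. f c) \<or> card {c. c < nkp k p \<and> f c} \<le> p"
  unfolding tau_def by (simp add: map_rep filt_card[symmetric] del: filter_map)

lemma row_val: "pval (tau k p) (map f [0..<nkp k p]) = (\<forall>c<nkp k p. f c)"
  unfolding tau_def by (simp add: map_rep)

lemma cover:
  fixes n p :: nat
  assumes "2*p < n" "card {c. c<n \<and> f c} \<le> p" "card {c. c<n \<and> g c} \<le> p"
    "\<forall>c<n. f c \<or> g c"
  shows False
proof -
  have "{..<n} \<subseteq> {c. c<n \<and> f c} \<union> {c. c<n \<and> g c}" using assms(4) by auto
  then have "card {..<n} \<le> card ({c. c<n \<and> f c} \<union> {c. c<n \<and> g c})"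
    by (intro card_mono) auto
  also have "\<dots> \<le> card {c. c<n \<and> f c} + card {c. c<n \<and> g c}" by (rule card_Un_le)
  finally show False using assms by simp
qed

lemma tau_pres:
  assumes "k \<ge> 2"
  shows "preserves (tau k p) 4 rho_1 \<and> preserves (tau k p) 4 rho_C"
proof -
  define n where "n = nkp k p"
  have ar: "arity (tau k p) = n" by (simp add: tau_def n_def)
  have np: "2*p < n" using assms unfolding n_def nkp_def
  proof -
    have "3 \<le> 2*k - 1" using assms by simp
    then have "3*p \<le> (2*k-1)*p" by (rule mult_right_mono) simp
    then show "2*p < (2*k-1)*p+1" by linarith
  qed
  have common: "\<And>M. (\<forall>i<4. map (M i) [0..<n] \<in> pdom (tau k p)) \<Longrightarrow>
     (\<forall>i<4. (\<forall>c<n. M i c) \<or> card {c. c<n \<and> M i c} \<le> p) \<and>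
     map (\<lambda>i. pval (tau k p) (map (M i) [0..<n])) [0..<4] =
       [(\<forall>c<n. M 0 c), (\<forall>c<n. M 1 c), (\<forall>c<n. M 2 c), (\<forall>c<n. M 3 c)]"
    unfolding n_def by (simp add: row_dom row_val upt4)
  have P1: "preserves (tau k p) 4 rho_1"
    unfolding preserves_def ar
  proof (intro allI impI)
    fix M :: "nat \<Rightarrow> nat \<Rightarrow> bool"
    assume r: "\<forall>i<4. map (M i) [0..<n] \<in> pdom (tau k p)"
      and c: "\<forall>c<n. map (\<lambda>i. M i c) [0..<4] \<in> rho_1"
    have cc: "\<forall>c<n. [M 0 c, M 1 c, M 2 c, M 3 c] \<in> rho_1" using c by (simp add: upt4)
    define A where "A i = (\<forall>c<n. M i c)" for i
    have R: "\<And>i. i < 4 \<Longrightarrow> \<not> A i \<Longrightarrow> card {c. c<n \<and> M i c} \<le> p"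
      using common[OF r] unfolding A_def by blast
    have out: "map (\<lambda>i. pval (tau k p) (map (M i) [0..<n])) [0..<4] = [A 0, A 1, A 2, A 3]"
      using common[OF r] unfolding A_def by blast
    have h12: "A 1 \<and> A 2 \<Longrightarrow> A 0 \<and> A 3"
      using cc unfolding A_def rho_1_def by fastforce
    have h03: "A 0 \<and> A 3 \<Longrightarrow> A 1 \<and> A 2"
      using cc unfolding A_def rho_1_def by fastforce
    have h0: "A 0 \<Longrightarrow> A 1 \<or> A 2"
    proof (rule ccontr)
      assume "A 0" "\<not> (A 1 \<or> A 2)"
      moreover have "\<forall>c<n. M 1 c \<or> M 2 c" using cc \<open>A 0\<close> unfolding A_def rho_1_def by fastforce
      ultimately show False using cover[OF np R[of 1] R[of 2]] by simp
    qed
    have h3: "A 3 \<Longrightarrow> A 1 \<or> A 2"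
    proof (rule ccontr)
      assume "A 3" "\<not> (A 1 \<or> A 2)"
      moreover have "\<forall>c<n. M 1 c \<or> M 2 c" using cc \<open>A 3\<close> unfolding A_def rho_1_def by fastforce
      ultimately show False using cover[OF np R[of 1] R[of 2]] by simp
    qed
    have h1: "A 1 \<Longrightarrow> A 0 \<or> A 3"
    proof (rule ccontr)
      assume "A 1" "\<not> (A 0 \<or> A 3)"
      moreover have "\<forall>c<n. M 0 c \<or> M 3 c" using cc \<open>A 1\<close> unfolding A_def rho_1_def by fastforce
      ultimately show False using cover[OF np R[of 0] R[of 3]] by simp
    qed
    have h2: "A 2 \<Longrightarrow> A 0 \<or> A 3"
    proof (rule ccontr)
      assume "A 2" "\<not> (A 0 \<or> A 3)"
      moreover have "\<forall>c<n. M 0 c \<or> M 3 c" using cc \<open>A 2\<close> unfolding A_def rho_1_def by fastforce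
      ultimately show False using cover[OF np R[of 0] R[of 3]] by simp
    qed
    show "map (\<lambda>i. pval (tau k p) (map (M i) [0..<n])) [0..<4] \<in> rho_1"
      unfolding out rho_1_def
      using h0 h1 h2 h3 h12 h03 by (cases "A 0"; cases "A 1"; cases "A 2"; cases "A 3"; simp)
  qed
  have PC: "preserves (tau k p) 4 rho_C"
    unfolding preserves_def ar
  proof (intro allI impI)
    fix M :: "nat \<Rightarrow> nat \<Rightarrow> bool"
    assume r: "\<forall>i<4. map (M i) [0..<n] \<in> pdom (tau k p)"
      and c: "\<forall>c<n. map (\<lambda>i. M i c) [0..<4] \<in> rho_C"
    have cc: "\<forall>c<n. [M 0 c, M 1 c, M 2 c, M 3 c] \<in> rho_C" using c by (simp add: upt4)
    define A where "A i = (\<forall>c<n. M i c)" for i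
    have R: "\<And>i. i < 4 \<Longrightarrow> \<not> A i \<Longrightarrow> card {c. c<n \<and> M i c} \<le> p"
      using common[OF r] unfolding A_def by blast
    have out: "map (\<lambda>i. pval (tau k p) (map (M i) [0..<n])) [0..<4] = [A 0, A 1, A 2, A 3]"
      using common[OF r] unfolding A_def by blast
    have e: "\<forall>c<n. M 0 c = (M 1 c \<and> M 2 c) \<and> M 3 c = (M 1 c \<or> M 2 c)"
      using cc unfolding rho_C_def by fastforce
    have h0: "A 0 = (A 1 \<and> A 2)" using e unfolding A_def by blast
    have h3: "A 3 = (A 1 \<or> A 2)"
    proof
      assume "A 3"
      show "A 1 \<or> A 2"
      proof (rule ccontr)
        assume "\<not> (A 1 \<or> A 2)"
        moreover have "\<forall>c<n. M 1 c \<or> M 2 c" using e \<open>A 3\<close> unfolding A_def by blast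
        ultimately show False using cover[OF np R[of 1] R[of 2]] by simp
      qed
    next
      assume "A 1 \<or> A 2" then show "A 3" using e unfolding A_def by blast
    qed
    show "map (\<lambda>i. pval (tau k p) (map (M i) [0..<n])) [0..<4] \<in> rho_C"
      unfolding out rho_C_def h0 h3
      by (cases "A 1"; cases "A 2"; simp)
  qed
  show ?thesis using P1 PC by blast
qed

theorem mainTheorem15:
  fixes j :: nat
  assumes "j \<ge> 1"
  shows "preserves (xi j) 4 rho_1 \<and> preserves (xi j) 4 rho_C"
  unfolding xi_def by (rule tau_pres) (use assms in simp)

end
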